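(* Let $S=\{R_0,R_1,\ldots,R_d\}$ be a quasi-thin scheme on $X$, let $\mathbb{F}$ be a field and $x\in X$, and let $\mathcal{T}=\mathcal{T}(x)$ be the Terwilliger $\mathbb{F}$-algebra of $S$ with respect to $x$. Then $$\dim_{\mathbb{F}}\mathcal{T}=(d+1)^2+\bigl|\{(a,b): R_a,R_b\in S,\ |R_{a'}R_b|=2\}\bigr|+\bigl|\{(c,e): R_c,R_e\in S,\ (c,e)\text{ is a bad pair of }S\}\bigr|.$$
   Context: Let $\mathbb{F}$ be a field of characteristic $p$ ($p=0$ or a prime) and $X$ a nonempty finite set. A scheme (association scheme) of class $d$ on $X$ is a partition $S=\{R_0,\dots,R_d\}$ of $X\times X$ into nonempty sets such that $R_0=\{(b,b):b\in X\}$; for each $c$ there is $c'$ with $R_{c'}=\{(f,e):(e,f)\in R_c\}$; and for all $i,j,k$ the intersection number $p_{ij}^k=|\{\ell\in X:(m,\ell)\in R_i,(\ell,n)\in R_j\}|$ does not depend on the choice of $(m,n)\in R_k$. The valency of $R_a$ is $k_a=p_{aa'}^0$. The complex product of $R_a,R_b$ is $R_aR_b=\{R_c\in S:p_{ab}^c>0\}$. $S$ is quasi-thin if $k_a\le 2$ for all $a$. For $y\in X$, $yR_a=\{z\in X:(y,z)\in R_a\}$. $M_X(\mathbb F)$ denotes the $\mathbb F$-matrices with rows and columns indexed by $X$; $E_{uv}$ is the matrix unit at $(u,v)$. $A_a$ is the $(0,1)$ adjacency matrix of $R_a$, and $E_a^*(y)=\sum_{i\in yR_a}E_{ii}$. The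 Terwilliger $\mathbb F$-algebra $\mathcal T(y)$ is the $\mathbb F$-subalgebra of $M_X(\mathbb F)$ generated by $A_0,\dots,A_d,E_0^*(y),\dots,E_d^*(y)$. Bad pair: for $R_u,R_v\in S$, $(u,v)$ is a bad pair of $S$ if there exist an integer $a\ge 1$ and $R_{i_b},R_{j_b},R_{\ell_b}\in S$ for $b=0,\dots,a$ such that $i_0=u$, $\ell_a=v$, $k_{i_b}=k_{\ell_b}=2$ and $p_{i_bj_b}^{\ell_b}=1$ for all $b\in\{0,\dots,a\}$, $\ell_c=i_{c+1}$ for all $c\in\{0,\dots,a-1\}$, and $|R_{u'}R_v|=1$. *)

theory Defs
  imports Complex_Main "HOL-Library.Function_Algebras"
begin

text \<open>The point set X is modelled by a finite type 'x (X = UNIV, automatically nonempty).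
  A scheme of class d is given by R :: nat => ('x * 'x) set, with relations R 0, ..., R d.\<close>

definition pcount :: "(nat \<Rightarrow> ('x \<times> 'x) set) \<Rightarrow> nat \<Rightarrow> nat \<Rightarrow> 'x \<Rightarrow> 'x \<Rightarrow> nat" where
  "pcount R i j m n = card {l. (m, l) \<in> R i \<and> (l, n) \<in> R j}"

definition is_scheme :: "(nat \<Rightarrow> ('x::finite \<times> 'x) set) \<Rightarrow> nat \<Rightarrow> bool" where
  "is_scheme R d \<longleftrightarrow>
     (\<forall>c\<le>d. R c \<noteq> {}) \<and>
     (\<forall>z. \<exists>!c. c \<le> d \<and> z \<in> R c) \<and>
     R 0 = {(b, b) | b. True} \<and>
     (\<forall>c\<le>d. \<exists>c'\<le>d. R c' = {(f, e). (e, f) \<in> R c}) \<and>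
     (\<forall>i\<le>d. \<forall>j\<le>d. \<forall>k\<le>d. \<forall>m n m' n'. (m, n) \<in> R k \<longrightarrow> (m', n') \<in> R k \<longrightarrow>
        pcount R i j m n = pcount R i j m' n')"

text \<open>Intersection number p_{ij}^k (evaluated at some pair of R k).\<close>
definition inum :: "(nat \<Rightarrow> ('x \<times> 'x) set) \<Rightarrow> nat \<Rightarrow> nat \<Rightarrow> nat \<Rightarrow> nat" where
  "inum R i j k = (let z = (SOME z. z \<in> R k) in pcount R i j (fst z) (snd z))"

definition conv_idx :: "(nat \<Rightarrow> ('x \<times> 'x) set) \<Rightarrow> nat \<Rightarrow> nat \<Rightarrow> nat" where
  "conv_idx R d c = (THE c'. c' \<le> d \<and> R c' = {(f, e). (e, f) \<in> R c})"

definition valency :: "(nat \<Rightarrow> ('x \<times> 'x) set) \<Rightarrow> nat \<Rightarrow> nat \<Rightarrow> nat" where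
  "valency R d a = inum R a (conv_idx R d a) 0"

definition quasi_thin :: "(nat \<Rightarrow> ('x \<times> 'x) set) \<Rightarrow> nat \<Rightarrow> bool" where
  "quasi_thin R d \<longleftrightarrow> (\<forall>a\<le>d. valency R d a \<le> 2)"

text \<open>Complex product R_a R_b, as a set of indices.\<close>
definition cprod :: "(nat \<Rightarrow> ('x \<times> 'x) set) \<Rightarrow> nat \<Rightarrow> nat \<Rightarrow> nat \<Rightarrow> nat set" where
  "cprod R d a b = {c. c \<le> d \<and> inum R a b c > 0}"

definition bad_pair :: "(nat \<Rightarrow> ('x \<times> 'x) set) \<Rightarrow> nat \<Rightarrow> nat \<Rightarrow> nat \<Rightarrow> bool" where
  "bad_pair R d u v \<longleftrightarrow>
     (\<exists>a::nat. \<exists>i j l :: nat \<Rightarrow> nat. a \<ge> 1 \<and>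
        (\<forall>b\<le>a. i b \<le> d \<and> j b \<le> d \<and> l b \<le> d) \<and>
        i 0 = u \<and> l a = v \<and>
        (\<forall>b\<le>a. valency R d (i b) = 2 \<and> valency R d (l b) = 2 \<and> inum R (i b) (j b) (l b) = 1) \<and>
        (\<forall>c<a. l c = i (c + 1))) \<and>
     card (cprod R d (conv_idx R d u) v) = 1"

text \<open>Matrices in M_X(F) are functions 'x => 'x => 'f.\<close>
definition mmult :: "('x::finite \<Rightarrow> 'x \<Rightarrow> 'f::field) \<Rightarrow> ('x \<Rightarrow> 'x \<Rightarrow> 'f) \<Rightarrow> ('x \<Rightarrow> 'x \<Rightarrow> 'f)" where
  "mmult M N = (\<lambda>i k. \<Sum>j\<in>UNIV. M i j * N j k)"

definition mscale :: "'f::field \<Rightarrow> ('x \<Rightarrow> 'x \<Rightarrow> 'f) \<Rightarrow> ('x \<Rightarrow> 'x \<Rightarrow> 'f)" where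
  "mscale c M = (\<lambda>i j. c * M i j)"

definition adj_mat :: "(nat \<Rightarrow> ('x \<times> 'x) set) \<Rightarrow> nat \<Rightarrow> ('x \<Rightarrow> 'x \<Rightarrow> 'f::field)" where
  "adj_mat R a = (\<lambda>u v. if (u, v) \<in> R a then 1 else 0)"

definition dual_idem :: "(nat \<Rightarrow> ('x \<times> 'x) set) \<Rightarrow> 'x \<Rightarrow> nat \<Rightarrow> ('x \<Rightarrow> 'x \<Rightarrow> 'f::field)" where
  "dual_idem R y a = (\<lambda>u v. if u = v \<and> (y, u) \<in> R a then 1 else 0)"

inductive_set gen_alg :: "('x::finite \<Rightarrow> 'x \<Rightarrow> 'f::field) set \<Rightarrow> ('x \<Rightarrow> 'x \<Rightarrow> 'f) set"
  for G where
  gen: "M \<in> G \<Longrightarrow> M \<in> gen_alg G"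
| one: "(\<lambda>i j. if i = j then 1 else 0) \<in> gen_alg G"
| add: "M \<in> gen_alg G \<Longrightarrow> N \<in> gen_alg G \<Longrightarrow> M + N \<in> gen_alg G"
| scale: "M \<in> gen_alg G \<Longrightarrow> mscale c M \<in> gen_alg G"
| mult: "M \<in> gen_alg G \<Longrightarrow> N \<in> gen_alg G \<Longrightarrow> mmult M N \<in> gen_alg G"

definition terwilliger :: "(nat \<Rightarrow> ('x::finite \<times> 'x) set) \<Rightarrow> nat \<Rightarrow> 'x \<Rightarrow> ('x \<Rightarrow> 'x \<Rightarrow> 'f::field) set" where
  "terwilliger R d y = gen_alg ({adj_mat R a | a. a \<le> d} \<union> {dual_idem R y a | a. a \<le> d})"

definition fdim :: "('x::finite \<Rightarrow> 'x \<Rightarrow> 'f::field) set \<Rightarrow> nat" where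
  "fdim V = vector_space.dim (mscale :: 'f \<Rightarrow> _) V"

end

theory Submission
  imports Defs
begin


lemma mscale_vs: "vector_space (mscale :: 'f::field \<Rightarrow> ('x \<Rightarrow> 'x \<Rightarrow> 'f) \<Rightarrow> _)"
  by unfold_locales (auto simp: mscale_def fun_eq_iff ring_distribs)

global_interpretation mv: vector_space "mscale :: 'f::field \<Rightarrow> ('x \<Rightarrow> 'x \<Rightarrow> 'f) \<Rightarrow> _"
  by (rule mscale_vs)

lemma fdim_eq: "fdim V = mv.dim V"
  unfolding fdim_def by simp

definition ind :: "('x \<times> 'x) set \<Rightarrow> 'x \<Rightarrow> 'x \<Rightarrow> 'f::field" where
  "ind F = (\<lambda>u v. if (u, v) \<in> F then 1 else 0)"

lemma mmult_ind: "mmult (ind F) (ind G :: 'x::finite \<Rightarrow> 'x \<Rightarrow> 'f::field)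
   = (\<lambda>u w. of_nat (card {v. (u, v) \<in> F \<and> (v, w) \<in> G}))"
proof (intro ext)
  fix u w
  have "mmult (ind F) (ind G :: 'x \<Rightarrow> 'x \<Rightarrow> 'f) u w
      = (\<Sum>v\<in>UNIV. if v \<in> {v. (u, v) \<in> F \<and> (v, w) \<in> G} then (1::'f) else 0)"
    unfolding mmult_def ind_def by (intro sum.cong) auto
  also have "\<dots> = of_nat (card {v. (u, v) \<in> F \<and> (v, w) \<in> G})"
    by (subst sum.If_cases) auto
  finally show "mmult (ind F) (ind G :: 'x \<Rightarrow> 'x \<Rightarrow> 'f) u w = of_nat (card {v. (u, v) \<in> F \<and> (v, w) \<in> G})" .
qed


lemma ind_apply: "ind F u v = (if (u, v) \<in> F then 1 else 0)"
  unfolding ind_def by simp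

lemma sum_app: "finite A \<Longrightarrow> (sum f A :: 'a \<Rightarrow> 'b \<Rightarrow> 'c::comm_monoid_add) u v = (\<Sum>a\<in>A. f a u v)"
  by (induction A rule: finite_induct) auto

lemma mult_func: assumes "\<And>u v v'. (u, v) \<in> F \<Longrightarrow> (u, v') \<in> F \<Longrightarrow> v = v'"
  shows "mmult (ind F) (ind G :: 'x::finite \<Rightarrow> 'x \<Rightarrow> 'f::field) = ind (F O G)"
proof (intro ext)
  fix u w
  show "mmult (ind F) (ind G :: 'x \<Rightarrow> 'x \<Rightarrow> 'f) u w = ind (F O G) u w"
  proof (cases "(u, w) \<in> F O G")
    case True
    then obtain v where v: "(u, v) \<in> F" "(v, w) \<in> G" by blast
    then have "{v. (u, v) \<in> F \<and> (v, w) \<in> G} = {v}" using assms by blast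
    then show ?thesis using True unfolding mmult_ind by (simp add: ind_apply)
  next
    case False
    then have e: "{v. (u, v) \<in> F \<and> (v, w) \<in> G} = {}" by blast
    show ?thesis using False unfolding mmult_ind e by (simp add: ind_apply)
  qed
qed

lemma mult_zero: assumes "\<And>u v w. (u, v) \<in> F \<Longrightarrow> (v, w) \<notin> G"
  shows "mmult (ind F) (ind G :: 'x::finite \<Rightarrow> 'x \<Rightarrow> 'f::field) = 0"
proof -
  have e: "\<And>u w. {v. (u, v) \<in> F \<and> (v, w) \<in> G} = {}" using assms by blast
  show ?thesis unfolding mmult_ind e by (simp add: fun_eq_iff)
qed

lemma mult_J_perm: assumes "G \<subseteq> B \<times> D" "\<And>w. w \<in> D \<Longrightarrow> \<exists>!v. (v, w) \<in> G"
  shows "mmult (ind (A \<times> B)) (ind G :: 'x::finite \<Rightarrow> 'x \<Rightarrow> 'f::field) = ind (A \<times> D)"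
proof (intro ext)
  fix u w
  show "mmult (ind (A \<times> B)) (ind G :: 'x \<Rightarrow> 'x \<Rightarrow> 'f) u w = ind (A \<times> D) u w"
  proof (cases "u \<in> A \<and> w \<in> D")
    case True
    then obtain v where v: "(v, w) \<in> G" "\<And>v'. (v', w) \<in> G \<Longrightarrow> v' = v" using assms(2) by blast
    then have "{v. (u, v) \<in> A \<times> B \<and> (v, w) \<in> G} = {v}" using assms(1) True by blast
    then show ?thesis using True unfolding mmult_ind by (simp add: ind_apply)
  next
    case False
    then have e: "{v. (u, v) \<in> A \<times> B \<and> (v, w) \<in> G} = {}" using assms(1) by blast
    show ?thesis using False unfolding mmult_ind e by (auto simp add: ind_apply)
  qed
qed

lemma mult_perm_J: assumes "F \<subseteq> A \<times> B" "\<And>u. u \<in> A \<Longrightarrow> \<exists>!v. (u, v) \<in> F"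
  shows "mmult (ind F) (ind (B \<times> D) :: 'x::finite \<Rightarrow> 'x \<Rightarrow> 'f::field) = ind (A \<times> D)"
proof (intro ext)
  fix u w
  show "mmult (ind F) (ind (B \<times> D) :: 'x \<Rightarrow> 'x \<Rightarrow> 'f) u w = ind (A \<times> D) u w"
  proof (cases "u \<in> A \<and> w \<in> D")
    case True
    then obtain v where v: "(u, v) \<in> F" "\<And>v'. (u, v') \<in> F \<Longrightarrow> v' = v" using assms(2) by blast
    then have "{v. (u, v) \<in> F \<and> (v, w) \<in> B \<times> D} = {v}" using assms(1) True by blast
    then show ?thesis using True unfolding mmult_ind by (simp add: ind_apply)
  next
    case False
    then have e: "{v. (u, v) \<in> F \<and> (v, w) \<in> B \<times> D} = {}" using assms(1) by blast
    show ?thesis using False unfolding mmult_ind e by (auto simp add: ind_apply)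
  qed
qed

lemma mult_J_J:
  "mmult (ind (A \<times> B)) (ind (B \<times> D) :: 'x::finite \<Rightarrow> 'x \<Rightarrow> 'f::field) = mscale (of_nat (card B)) (ind (A \<times> D))"
proof (intro ext)
  fix u w
  have "{v. (u, v) \<in> A \<times> B \<and> (v, w) \<in> B \<times> D} = (if u \<in> A \<and> w \<in> D then B else {})" by auto
  then show "mmult (ind (A \<times> B)) (ind (B \<times> D) :: 'x \<Rightarrow> 'x \<Rightarrow> 'f) u w = mscale (of_nat (card B)) (ind (A \<times> D)) u w"
    unfolding mmult_ind by (simp add: ind_apply mscale_def)
qed

lemma ind_diff: "F \<subseteq> G \<Longrightarrow> ind (G - F) = (ind G - ind F :: 'x \<Rightarrow> 'x \<Rightarrow> 'f::field)"
  unfolding ind_def fun_eq_iff by auto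


lemma mult_func_r: assumes "\<And>u u' v. (u, v) \<in> G \<Longrightarrow> (u', v) \<in> G \<Longrightarrow> u = u'"
  shows "mmult (ind F) (ind G :: 'x::finite \<Rightarrow> 'x \<Rightarrow> 'f::field) = ind (F O G)"
proof (intro ext)
  fix u w
  show "mmult (ind F) (ind G :: 'x \<Rightarrow> 'x \<Rightarrow> 'f) u w = ind (F O G) u w"
  proof (cases "(u, w) \<in> F O G")
    case True
    then obtain v where v: "(u, v) \<in> F" "(v, w) \<in> G" by blast
    then have "{v. (u, v) \<in> F \<and> (v, w) \<in> G} = {v}" using assms by blast
    then show ?thesis using True unfolding mmult_ind by (simp add: ind_apply)
  next
    case False
    then have e: "{v. (u, v) \<in> F \<and> (v, w) \<in> G} = {}" by blast
    show ?thesis using False unfolding mmult_ind e by (simp add: ind_apply)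
  qed
qed




locale qts =
  fixes R :: "nat \<Rightarrow> ('x::finite \<times> 'x) set" and d :: nat and x :: 'x
  assumes sch: "is_scheme R d" and qth: "quasi_thin R d"
begin

lemma schD: "(\<forall>c\<le>d. R c \<noteq> {})" "(\<forall>z. \<exists>!c. c \<le> d \<and> z \<in> R c)"
     "R 0 = {(b, b) | b. True}" "(\<forall>c\<le>d. \<exists>c'\<le>d. R c' = {(f, e). (e, f) \<in> R c})"
     "(\<forall>i\<le>d. \<forall>j\<le>d. \<forall>k\<le>d. \<forall>m n m' n'. (m, n) \<in> R k \<longrightarrow> (m', n') \<in> R k \<longrightarrow>
        pcount R i j m n = pcount R i j m' n')"
  using sch unfolding is_scheme_def apply - apply ((elim conjE), assumption)+ done

lemma nonempty: "c \<le> d \<Longrightarrow> R c \<noteq> {}"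
  using schD(1) by simp
lemma part: "\<exists>!c. c \<le> d \<and> z \<in> R c"
  using schD(2) by (cases z) simp
lemma R0: "R 0 = {(b, b) | b. True}"
  using schD(3) by simp
lemma conv_ex: "c \<le> d \<Longrightarrow> \<exists>c'\<le>d. R c' = {(f, e). (e, f) \<in> R c}"
  using schD(4) by simp
lemma reg: "i \<le> d \<Longrightarrow> j \<le> d \<Longrightarrow> k \<le> d \<Longrightarrow> (m, n) \<in> R k \<Longrightarrow> (m', n') \<in> R k \<Longrightarrow>
        pcount R i j m n = pcount R i j m' n'"
  by (rule schD(5)[rule_format])

lemma uniq: "a \<le> d \<Longrightarrow> b \<le> d \<Longrightarrow> z \<in> R a \<Longrightarrow> z \<in> R b \<Longrightarrow> a = b"
  using part[of z] unfolding Ex1_def by (elim exE conjE) (metis)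

definition rel where "rel z = (THE c. c \<le> d \<and> z \<in> R c)"
lemma rel: "rel z \<le> d" "z \<in> R (rel z)"
proof -
  have "rel z \<le> d \<and> z \<in> R (rel z)" unfolding rel_def by (rule theI') (rule part)
  then show "rel z \<le> d" "z \<in> R (rel z)" by auto
qed
lemma rel_eq: "c \<le> d \<Longrightarrow> z \<in> R c \<Longrightarrow> rel z = c"
  using rel(1,2)[of z] uniq[of c "rel z" z] by simp

abbreviation cv where "cv c \<equiv> conv_idx R d c"
lemma cv: assumes "c \<le> d" shows "cv c \<le> d" "R (cv c) = {(f, e). (e, f) \<in> R c}"
proof -
  obtain c' where c': "c' \<le> d" "R c' = {(f, e). (e, f) \<in> R c}" using conv_ex[OF assms] by blast
  have uq: "c'' = c'" if h: "c'' \<le> d \<and> R c'' = {(f, e). (e, f) \<in> R c}" for c''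
  proof -
    obtain z where z: "z \<in> R c'" using nonempty[OF c'(1)] by blast
    then have "z \<in> R c''" using h c'(2) by simp
    then show "c'' = c'" using uniq[of c'' c' z] h c'(1) z by simp
  qed
  have "cv c = c'" unfolding conv_idx_def
    by (rule the_equality) (use c' in simp, use uq in blast)
  then show "cv c \<le> d" "R (cv c) = {(f, e). (e, f) \<in> R c}" using c' by simp_all
qed
lemma cv_mem: "c \<le> d \<Longrightarrow> (u, v) \<in> R (cv c) \<longleftrightarrow> (v, u) \<in> R c"
  using cv by auto

lemma inum_eq: assumes "i \<le> d" "j \<le> d" "k \<le> d" "(m, n) \<in> R k"
  shows "inum R i j k = pcount R i j m n"
proof -
  have "(SOME z. z \<in> R k) \<in> R k" using assms(4) by (rule someI)
  then have "pcount R i j (fst (SOME z. z \<in> R k)) (snd (SOME z. z \<in> R k)) = pcount R i j m n"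
    using reg[OF assms(1-3), of "fst (SOME z. z \<in> R k)" "snd (SOME z. z \<in> R k)" m n] assms(4) by simp
  then show ?thesis unfolding inum_def Let_def .
qed

definition X where "X a = {u. (x, u) \<in> R a}"

lemma xx0: "(x, x) \<in> R 0" using R0 by auto

lemma valency_card: assumes "a \<le> d" shows "valency R d a = card (X a)"
proof -
  have "valency R d a = pcount R a (cv a) x x"
    unfolding valency_def using inum_eq[OF assms cv(1)[OF assms] _ xx0] by simp
  also have "\<dots> = card (X a)" unfolding pcount_def X_def using cv_mem[OF assms] by simp
  finally show ?thesis .
qed

lemma X_ne: assumes "a \<le> d" shows "X a \<noteq> {}"
proof -
  obtain m n where mn: "(m, n) \<in> R a" using nonempty[OF assms] by auto
  have mm: "(m, m) \<in> R 0" using R0 by auto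
  have "pcount R a (cv a) m m \<noteq> 0"
    unfolding pcount_def using mn cv_mem[OF assms] by (subst card_0_eq) auto
  then have "pcount R a (cv a) x x \<noteq> 0"
    using reg[OF assms cv(1)[OF assms] _ mm xx0] by simp
  then show ?thesis unfolding pcount_def X_def by auto
qed

lemma X_card: assumes "a \<le> d" shows "card (X a) = 1 \<or> card (X a) = 2"
proof -
  have "card (X a) \<le> 2" using qth assms valency_card[OF assms] unfolding quasi_thin_def by auto
  moreover have "card (X a) \<noteq> 0" using X_ne[OF assms] by simp
  ultimately show ?thesis by linarith
qed

lemma X_disj: "a \<le> d \<Longrightarrow> b \<le> d \<Longrightarrow> u \<in> X a \<Longrightarrow> u \<in> X b \<Longrightarrow> a = b"
  unfolding X_def using uniq by blast

lemma X_rel: "u \<in> X (rel (x, u))" unfolding X_def using rel by auto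

lemma colcount: assumes "a \<le> d" "c \<le> d" "b \<le> d" "v \<in> X b"
  shows "card {u. u \<in> X a \<and> (u, v) \<in> R c} = inum R a c b"
  using inum_eq[OF assms(1-3), of x v] assms(4) unfolding pcount_def X_def by simp

lemma rowcount: assumes "a \<le> d" "c \<le> d" "b \<le> d" "u \<in> X a"
  shows "card {v. v \<in> X b \<and> (u, v) \<in> R c} = inum R c (cv b) (cv a)"
proof -
  have "(u, x) \<in> R (cv a)" using assms cv_mem by (auto simp: X_def)
  then have "inum R c (cv b) (cv a) = pcount R c (cv b) u x"
    using inum_eq assms cv by auto
  then show ?thesis unfolding pcount_def X_def using cv_mem[OF assms(3)] by (simp add: conj_commute)
qed

end



context qts begin

abbreviation TT :: "('x \<Rightarrow> 'x \<Rightarrow> 'f::field) set" where "TT \<equiv> terwilliger R d x"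

lemma T_add: "M \<in> TT \<Longrightarrow> N \<in> TT \<Longrightarrow> M + N \<in> TT"
  unfolding terwilliger_def by (rule gen_alg.add)
lemma T_scale: "M \<in> TT \<Longrightarrow> mscale c M \<in> TT"
  unfolding terwilliger_def by (rule gen_alg.scale)
lemma T_mult: "M \<in> TT \<Longrightarrow> N \<in> TT \<Longrightarrow> mmult M N \<in> TT"
  unfolding terwilliger_def by (rule gen_alg.mult)
lemma T_adj: "c \<le> d \<Longrightarrow> adj_mat R c \<in> TT"
  unfolding terwilliger_def by (rule gen_alg.gen) blast
lemma T_dual: "a \<le> d \<Longrightarrow> dual_idem R x a \<in> TT"
  unfolding terwilliger_def by (rule gen_alg.gen) blast
lemma T_zero: "0 \<in> TT"
proof -
  have "mscale 0 (\<lambda>i j. if i = j then 1 else 0) \<in> TT"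
    unfolding terwilliger_def by (intro gen_alg.scale gen_alg.one)
  moreover have "mscale 0 (\<lambda>i j. if i = j then 1 else 0) = (0 :: 'x \<Rightarrow> 'x \<Rightarrow> 'f::field)"
    by (simp add: mscale_def fun_eq_iff)
  ultimately show ?thesis by simp
qed
lemma T_sum: "finite A \<Longrightarrow> (\<And>a. a \<in> A \<Longrightarrow> f a \<in> TT) \<Longrightarrow> sum f A \<in> TT"
  by (induction A rule: finite_induct) (auto intro: T_add T_zero)

lemma T_subspace: "mv.subspace TT"
  unfolding mv.subspace_def using T_zero T_add T_scale by blast

lemma adj_ind: "adj_mat R c = ind (R c)"
  unfolding adj_mat_def ind_def by simp

definition D where "D a = {(u, u) | u. u \<in> X a}"
lemma dual_ind: "dual_idem R x a = ind (D a)"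
  unfolding dual_idem_def ind_def D_def X_def by (auto simp: fun_eq_iff)

lemma blockT: assumes "a \<le> d" "c \<le> d" "b \<le> d"
  shows "(ind (R c \<inter> X a \<times> X b) :: 'x \<Rightarrow> 'x \<Rightarrow> 'f::field) \<in> TT"
proof -
  have "mmult (mmult (dual_idem R x a) (adj_mat R c)) (dual_idem R x b) = (ind ((D a O R c) O D b) :: 'x \<Rightarrow> 'x \<Rightarrow> 'f)"
    unfolding dual_ind adj_ind
    by (subst mult_func, force simp: D_def) (subst mult_func_r, auto simp: D_def)
  also have "(D a O R c) O D b = R c \<inter> X a \<times> X b" unfolding D_def by auto
  finally show ?thesis using T_mult T_dual T_adj assms by metis
qed

lemma rel_iff: "c \<le> d \<Longrightarrow> z \<in> R c \<longleftrightarrow> c = rel z"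
  using rel_eq[of c z] rel(2)[of z] by auto

lemma J_T: assumes "a \<le> d" "b \<le> d"
  shows "(ind (X a \<times> X b) :: 'x \<Rightarrow> 'x \<Rightarrow> 'f::field) \<in> TT"
proof -
  have "(ind (X a \<times> X b) :: 'x \<Rightarrow> 'x \<Rightarrow> 'f) = (\<Sum>c\<in>{..d}. ind (R c \<inter> X a \<times> X b))"
  proof (intro ext)
    fix u v
    have "(\<Sum>c\<in>{..d}. (ind (R c \<inter> X a \<times> X b) :: 'x \<Rightarrow> 'x \<Rightarrow> 'f) u v)
       = (\<Sum>c\<in>{..d}. if c = rel (u, v) then (if u \<in> X a \<and> v \<in> X b then 1 else 0) else 0)"
      by (intro sum.cong refl) (simp add: ind_apply rel_iff)
    also have "\<dots> = (if u \<in> X a \<and> v \<in> X b then 1 else 0)" using rel(1) by simp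
    finally show "(ind (X a \<times> X b) :: 'x \<Rightarrow> 'x \<Rightarrow> 'f) u v = (\<Sum>c\<in>{..d}. ind (R c \<inter> X a \<times> X b)) u v"
      by (simp add: sum_app ind_apply)
  qed
  moreover have "(\<Sum>c\<in>{..d}. ind (R c \<inter> X a \<times> X b)) \<in> (TT :: ('x \<Rightarrow> 'x \<Rightarrow> 'f) set)"
    by (rule T_sum) (auto intro: blockT assms)
  ultimately show ?thesis by simp
qed

definition pb where
  "pb a b F \<longleftrightarrow> F \<subseteq> X a \<times> X b \<and> (\<forall>u\<in>X a. \<exists>!v. (u, v) \<in> F) \<and> (\<forall>v\<in>X b. \<exists>!u. (u, v) \<in> F)"

lemma pb_sub: "pb a b F \<Longrightarrow> (u, v) \<in> F \<Longrightarrow> u \<in> X a \<and> v \<in> X b"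
  unfolding pb_def by blast
lemma pb_row: "pb a b F \<Longrightarrow> u \<in> X a \<Longrightarrow> \<exists>v. (u, v) \<in> F"
  unfolding pb_def by blast
lemma pb_col: "pb a b F \<Longrightarrow> v \<in> X b \<Longrightarrow> \<exists>u. (u, v) \<in> F"
  unfolding pb_def by blast
lemma pb_func: assumes "pb a b F" "(u, v) \<in> F" "(u, v') \<in> F" shows "v = v'"
proof -
  have "u \<in> X a" using pb_sub[OF assms(1,2)] by simp
  then have "\<exists>!v. (u, v) \<in> F" using assms(1) unfolding pb_def by simp
  then show ?thesis using assms(2,3) by (metis ex1E)
qed
lemma pb_inj: assumes "pb a b F" "(u, v) \<in> F" "(u', v) \<in> F" shows "u = u'"
proof -
  have "v \<in> X b" using pb_sub[OF assms(1,2)] by simp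
  then have "\<exists>!u. (u, v) \<in> F" using assms(1) unfolding pb_def by simp
  then show ?thesis using assms(2,3) by (metis ex1E)
qed
lemma pbI: assumes "F \<subseteq> X a \<times> X b" "\<And>u. u \<in> X a \<Longrightarrow> \<exists>v. (u, v) \<in> F"
  "\<And>v. v \<in> X b \<Longrightarrow> \<exists>u. (u, v) \<in> F"
  "\<And>u v v'. (u, v) \<in> F \<Longrightarrow> (u, v') \<in> F \<Longrightarrow> v = v'"
  "\<And>u u' v. (u, v) \<in> F \<Longrightarrow> (u', v) \<in> F \<Longrightarrow> u = u'"
  shows "pb a b F"
  unfolding pb_def using assms by (metis (full_types))

lemma pb_comp: assumes F: "pb a b F" and G: "pb b c G" shows "pb a c (F O G)"
proof (rule pbI)
  show "F O G \<subseteq> X a \<times> X c" using pb_sub[OF F] pb_sub[OF G] by blast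
  show "\<exists>w. (u, w) \<in> F O G" if "u \<in> X a" for u
    using pb_row[OF F that] pb_row[OF G] pb_sub[OF F] by blast
  show "\<exists>u. (u, w) \<in> F O G" if "w \<in> X c" for w
    using pb_col[OF G that] pb_col[OF F] pb_sub[OF G] by blast
  show "w = w'" if "(u, w) \<in> F O G" "(u, w') \<in> F O G" for u w w'
    using that pb_func[OF F] pb_func[OF G] by blast
  show "u = u'" if "(u, w) \<in> F O G" "(u', w) \<in> F O G" for u u' w
    using that pb_inj[OF F] pb_inj[OF G] by blast
qed

lemma pb_two: assumes "card (X b) = 2" "pb a b F" "pb a b G"
  shows "G = F \<or> G = X a \<times> X b - F"
proof (rule ccontr)
  assume nc: "\<not> (G = F \<or> G = X a \<times> X b - F)"
  obtain w1 w2 where w: "X b = {w1, w2}" "w1 \<noteq> w2" using assms(1) by (meson card_2_iff)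
  have same: "\<exists>u1 v. (u1, v) \<in> F \<and> (u1, v) \<in> G"
  proof (rule ccontr)
    assume ns: "\<not> ?thesis"
    have "G = X a \<times> X b - F"
    proof (intro set_eqI iffI)
      fix p assume p: "p \<in> G"
      then show "p \<in> X a \<times> X b - F" using pb_sub[OF assms(3)] ns by (cases p) auto
    next
      fix p assume p: "p \<in> X a \<times> X b - F"
      obtain u v where uv: "p = (u, v)" "u \<in> X a" "v \<in> X b" "(u, v) \<notin> F" using p by auto
      obtain v1 where v1: "(u, v1) \<in> F" using pb_row[OF assms(2) uv(2)] by blast
      obtain v2 where v2: "(u, v2) \<in> G" using pb_row[OF assms(3) uv(2)] by blast
      have "v1 \<noteq> v2" using ns v1 v2 by blast
      moreover have "v1 \<noteq> v" using v1 uv by blast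
      moreover have "v1 \<in> X b" "v2 \<in> X b" using pb_sub[OF assms(2) v1] pb_sub[OF assms(3) v2] by auto
      ultimately have "v2 = v" using w uv(3) by auto
      then show "p \<in> G" using v2 uv by simp
    qed
    then show False using nc by blast
  qed
  have diff: "\<exists>u2 v v'. (u2, v) \<in> F \<and> (u2, v') \<in> G \<and> v \<noteq> v'"
  proof (rule ccontr)
    assume ns: "\<not> ?thesis"
    have "G = F"
    proof (intro set_eqI iffI)
      fix p assume p: "p \<in> G"
      obtain u v where uv: "p = (u, v)" by (cases p)
      have "u \<in> X a" using pb_sub[OF assms(3)] p uv by blast
      then obtain v1 where "(u, v1) \<in> F" using pb_row[OF assms(2)] by blast
      then show "p \<in> F" using ns p uv by blast
    next
      fix p assume p: "p \<in> F"
      obtain u v where uv: "p = (u, v)" by (cases p)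
      have "u \<in> X a" using pb_sub[OF assms(2)] p uv by blast
      then obtain v1 where "(u, v1) \<in> G" using pb_row[OF assms(3)] by blast
      then show "p \<in> G" using ns p uv by blast
    qed
    then show False using nc by blast
  qed
  obtain u1 v1 where 1: "(u1, v1) \<in> F" "(u1, v1) \<in> G" using same by blast
  obtain u2 v v' where 2: "(u2, v) \<in> F" "(u2, v') \<in> G" "v \<noteq> v'" using diff by blast
  have "u1 \<noteq> u2" using 1 2 pb_func[OF assms(3)] pb_func[OF assms(2)] by blast
  then have "v \<noteq> v1" using 1 2 pb_inj[OF assms(2)] by blast
  moreover have "v \<in> X b" "v' \<in> X b" "v1 \<in> X b"
    using pb_sub[OF assms(2) 2(1)] pb_sub[OF assms(3) 2(2)] pb_sub[OF assms(2) 1(1)] by auto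
  ultimately have "v' = v1" using w 2(3) by auto
  then show False using 1 2 \<open>u1 \<noteq> u2\<close> pb_inj[OF assms(3)] by blast
qed

end



lemma two_split: assumes "finite A" "card A \<le> 2" "S1 \<inter> S2 = {}" "S1 \<union> S2 \<subseteq> A" "S1 \<noteq> {}" "S2 \<noteq> {}"
  shows "card S1 = 1 \<and> card A = 2"
proof -
  have f: "finite S1" "finite S2" using assms(1,4) finite_subset by blast+
  have "card S1 + card S2 = card (S1 \<union> S2)" using card_Un_disjoint[OF f assms(3)] by simp
  also have "\<dots> \<le> card A" using card_mono[OF assms(1,4)] .
  finally have "card S1 + card S2 \<le> card A" .
  moreover have "card S1 \<ge> 1" "card S2 \<ge> 1" using f assms(5,6) by (auto simp: Suc_le_eq card_gt_0_iff)
  ultimately show ?thesis using assms(2) by linarith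
qed

context qts begin

lemma X_le2: "a \<le> d \<Longrightarrow> card (X a) \<le> 2" using X_card[of a] by linarith

definition step where
  "step a b \<longleftrightarrow> a \<le> d \<and> b \<le> d \<and> card (X a) = 2 \<and> card (X b) = 2 \<and> (\<exists>j\<le>d. inum R a j b = 1)"

lemma card1_ex1: "card S = 1 \<Longrightarrow> \<exists>!u. u \<in> S"
  by (auto simp: card_1_singleton_iff)

lemma step_pb: assumes st: "step a b" shows "\<exists>j\<le>d. pb a b (R j \<inter> X a \<times> X b)"
proof -
  obtain j where j: "j \<le> d" "inum R a j b = 1" and ab: "a \<le> d" "b \<le> d" "card (X a) = 2" "card (X b) = 2"
    using st unfolding step_def by blast
  define F where "F = R j \<inter> X a \<times> X b"
  have col: "\<exists>!u. u \<in> {u. u \<in> X a \<and> (u, v) \<in> R j}" if "v \<in> X b" for v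
    using colcount[OF ab(1) j(1) ab(2) that] j(2) card1_ex1[of "{u. u \<in> X a \<and> (u, v) \<in> R j}"] by simp
  define m where "m = inum R j (cv b) (cv a)"
  have row: "card {v. v \<in> X b \<and> (u, v) \<in> R j} = m" if "u \<in> X a" for u
    using rowcount[OF ab(1) j(1) ab(2) that] m_def by simp
  have fin: "finite {v. v \<in> X b \<and> (u, v) \<in> R j}" for u by simp
  have colu: "u = u'" if "(u, v) \<in> F" "(u', v) \<in> F" for u u' v
    using that col unfolding F_def by blast
  have "m \<ge> 1"
  proof -
    obtain v where v: "v \<in> X b" using X_ne[OF ab(2)] by blast
    then obtain u where "u \<in> X a" "(u, v) \<in> R j" using col by blast
    then have "v \<in> {v. v \<in> X b \<and> (u, v) \<in> R j}" using v by simp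
    then have "card {v. v \<in> X b \<and> (u, v) \<in> R j} > 0" using fin[of u] by (auto simp: card_gt_0_iff)
    then have "card {v. v \<in> X b \<and> (u, v) \<in> R j} \<ge> 1" by simp
    then show ?thesis using row \<open>u \<in> X a\<close> by simp
  qed
  have rowex: "\<exists>v. (u, v) \<in> F" if "u \<in> X a" for u
  proof -
    have "card {v. v \<in> X b \<and> (u, v) \<in> R j} \<noteq> 0" using row[OF that] \<open>m \<ge> 1\<close> by simp
    then have "{v. v \<in> X b \<and> (u, v) \<in> R j} \<noteq> {}" by (intro notI) simp
    then obtain v where "v \<in> X b" "(u, v) \<in> R j" by blast
    then show ?thesis using that unfolding F_def by blast
  qed
  have rowu: "v1 = v2" if "(u, v1) \<in> F" "(u, v2) \<in> F" for u v1 v2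
  proof (rule ccontr)
    assume ne: "v1 \<noteq> v2"
    have u: "u \<in> X a" "v1 \<in> X b" "v2 \<in> X b" using that unfolding F_def by auto
    have "{v1, v2} \<subseteq> {v. v \<in> X b \<and> (u, v) \<in> R j}" using that unfolding F_def by auto
    then have "card {v1, v2} \<le> m" using card_mono[OF fin[of u]] row[OF u(1)] by simp
    then have "2 \<le> m" using ne by simp
    obtain p q where pq: "X a = {p, q}" "p \<noteq> q" using ab(3) by (meson card_2_iff)
    define u' where "u' = (if u = p then q else p)"
    have u': "u' \<in> X a" "u' \<noteq> u" using pq u(1) unfolding u'_def by auto
    have "{v. v \<in> X b \<and> (u', v) \<in> R j} \<subseteq> X b" by auto
    moreover have "card {v. v \<in> X b \<and> (u', v) \<in> R j} \<ge> card (X b)" using row[OF u'(1)] \<open>2 \<le> m\<close> ab(4) by simp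
    ultimately have "{v. v \<in> X b \<and> (u', v) \<in> R j} = X b" by (intro card_seteq) simp_all
    then have "(u', v1) \<in> F" using u u'(1) unfolding F_def by blast
    then show False using colu[OF that(1)] u'(2) by blast
  qed
  have "pb a b F"
  proof (rule pbI)
    show "F \<subseteq> X a \<times> X b" unfolding F_def by blast
    show "\<exists>u. (u, v) \<in> F" if "v \<in> X b" for v using col[OF that] that unfolding F_def by blast
    show "\<exists>v. (u, v) \<in> F" if "u \<in> X a" for u using rowex[OF that] .
    show "v = v'" if "(u, v) \<in> F" "(u, v') \<in> F" for u v v' using rowu[OF that] .
    show "u = u'" if "(u, v) \<in> F" "(u', v) \<in> F" for u u' v using colu[OF that] .
  qed
  then show ?thesis using j(1) F_def by blast
qed

lemma step_reflI: "a \<le> d \<Longrightarrow> card (X a) = 2 \<Longrightarrow> step a a"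
proof -
  assume a: "a \<le> d" "card (X a) = 2"
  obtain m n where mn: "(m, n) \<in> R a" using nonempty[OF a(1)] by auto
  have "inum R a 0 a = pcount R a 0 m n" using inum_eq[OF a(1) _ a(1) mn] by simp
  also have "{l. (m, l) \<in> R a \<and> (l, n) \<in> R 0} = {n}" using mn R0 by auto
  then have "pcount R a 0 m n = 1" unfolding pcount_def by simp
  finally show ?thesis unfolding step_def using a by auto
qed


lemma col_pos: assumes "a \<le> d" "c \<le> d" "b \<le> d" "u \<in> X a" "v \<in> X b" "(u, v) \<in> R c" "v' \<in> X b"
  shows "{u. u \<in> X a \<and> (u, v') \<in> R c} \<noteq> {}"
proof -
  have "u \<in> {u. u \<in> X a \<and> (u, v) \<in> R c}" using assms by simp
  then have "card {u. u \<in> X a \<and> (u, v) \<in> R c} \<noteq> 0" by (auto simp: card_eq_0_iff)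
  then have "card {u. u \<in> X a \<and> (u, v') \<in> R c} \<noteq> 0"
    using colcount[OF assms(1-3) assms(5)] colcount[OF assms(1-3) assms(7)] by simp
  then show ?thesis by (intro notI) simp
qed

lemma row_pos: assumes "a \<le> d" "c \<le> d" "b \<le> d" "u \<in> X a" "v \<in> X b" "(u, v) \<in> R c" "u' \<in> X a"
  shows "{v. v \<in> X b \<and> (u', v) \<in> R c} \<noteq> {}"
proof -
  have "v \<in> {v. v \<in> X b \<and> (u, v) \<in> R c}" using assms by simp
  then have "card {v. v \<in> X b \<and> (u, v) \<in> R c} \<noteq> 0" by (auto simp: card_eq_0_iff)
  then have "card {v. v \<in> X b \<and> (u', v) \<in> R c} \<noteq> 0"
    using rowcount[OF assms(1-3) assms(4)] rowcount[OF assms(1-3) assms(7)] by simp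
  then show ?thesis by (intro notI) simp
qed

lemma block_cases: assumes ab: "a \<le> d" "c \<le> d" "b \<le> d"
  shows "R c \<inter> X a \<times> X b = {} \<or> R c \<inter> X a \<times> X b = X a \<times> X b
     \<or> (pb a b (R c \<inter> X a \<times> X b) \<and> step a b)"
proof (rule ccontr)
  define F where "F = R c \<inter> X a \<times> X b"
  assume "\<not> ?thesis"
  then have ne: "F \<noteq> {}" "F \<noteq> X a \<times> X b" and npb: "\<not> (pb a b F \<and> step a b)" unfolding F_def by auto
  obtain u0 v0 where 0: "u0 \<in> X a" "v0 \<in> X b" "(u0, v0) \<in> R c" using ne(1) unfolding F_def by auto
  obtain u1 v1 where 1: "u1 \<in> X a" "v1 \<in> X b" "(u1, v1) \<notin> R c" using ne(2) unfolding F_def by auto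
  define c2 where "c2 = rel (u1, v1)"
  have c2: "c2 \<le> d" "(u1, v1) \<in> R c2" "c2 \<noteq> c" using rel 1(3) unfolding c2_def by auto
  have disj: "z \<in> R c \<Longrightarrow> z \<notin> R c2" for z using uniq[OF ab(2) c2(1)] c2(3) by blast
  have colc: "card {u. u \<in> X a \<and> (u, v) \<in> R c} = 1 \<and> card (X a) = 2" if v: "v \<in> X b" for v
    by (rule two_split[of "X a" "{u. u \<in> X a \<and> (u, v) \<in> R c}" "{u. u \<in> X a \<and> (u, v) \<in> R c2}"])
       (use X_le2[OF ab(1)] disj col_pos[OF ab 0 v] col_pos[OF ab(1) c2(1) ab(3) 1(1,2) c2(2) v] in auto)
  have rowc: "card {v. v \<in> X b \<and> (u, v) \<in> R c} = 1 \<and> card (X b) = 2" if u: "u \<in> X a" for u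
    by (rule two_split[of "X b" "{v. v \<in> X b \<and> (u, v) \<in> R c}" "{v. v \<in> X b \<and> (u, v) \<in> R c2}"])
       (use X_le2[OF ab(3)] disj row_pos[OF ab 0 u] row_pos[OF ab(1) c2(1) ab(3) 1(1,2) c2(2) u] in auto)
  have st: "step a b" unfolding step_def
    using ab colc[OF 0(2)] rowc[OF 0(1)] colcount[OF ab 0(2)] by auto
  have "pb a b F"
  proof (rule pbI)
    show "F \<subseteq> X a \<times> X b" unfolding F_def by blast
    show "\<exists>v. (u, v) \<in> F" if "u \<in> X a" for u
      using card1_ex1[OF conjunct1[OF rowc[OF that]]] that unfolding F_def by blast
    show "\<exists>u. (u, v) \<in> F" if "v \<in> X b" for v
      using card1_ex1[OF conjunct1[OF colc[OF that]]] that unfolding F_def by blast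
    show "v = v'" if "(u, v) \<in> F" "(u, v') \<in> F" for u v v'
      using card1_ex1[OF conjunct1[OF rowc]] that unfolding F_def by blast
    show "u = u'" if "(u, v) \<in> F" "(u', v) \<in> F" for u u' v
      using card1_ex1[OF conjunct1[OF colc]] that unfolding F_def by blast
  qed
  then show False using npb st by blast
qed

lemma cprod_iff: assumes ab: "a \<le> d" "b \<le> d"
  shows "c \<in> cprod R d (cv a) b \<longleftrightarrow> c \<le> d \<and> (\<exists>u\<in>X a. \<exists>v\<in>X b. (u, v) \<in> R c)"
proof
  assume "c \<le> d \<and> (\<exists>u\<in>X a. \<exists>v\<in>X b. (u, v) \<in> R c)"
  then obtain u v where uv: "c \<le> d" "u \<in> X a" "v \<in> X b" "(u, v) \<in> R c" by blast
  have "inum R (cv a) b c = pcount R (cv a) b u v" using inum_eq[OF cv(1)[OF ab(1)] ab(2) uv(1,4)] .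
  moreover have "x \<in> {l. (u, l) \<in> R (cv a) \<and> (l, v) \<in> R b}" using uv cv_mem[OF ab(1)] unfolding X_def by simp
  then have "pcount R (cv a) b u v > 0" unfolding pcount_def by (auto simp: card_gt_0_iff)
  ultimately show "c \<in> cprod R d (cv a) b" unfolding cprod_def using uv by simp
next
  assume "c \<in> cprod R d (cv a) b"
  then have c: "c \<le> d" "inum R (cv a) b c > 0" unfolding cprod_def by auto
  obtain m n where mn: "(m, n) \<in> R c" using nonempty[OF c(1)] by auto
  have "pcount R (cv a) b m n > 0" using c(2) inum_eq[OF cv(1)[OF ab(1)] ab(2) c(1) mn] by simp
  then obtain l where l: "(m, l) \<in> R (cv a)" "(l, n) \<in> R b" unfolding pcount_def
    by (metis (no_types, lifting) card.empty empty_Collect_eq less_irrefl)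
  have la: "(l, m) \<in> R a" using l(1) cv_mem[OF ab(1)] by simp
  have "m \<in> {k. (l, k) \<in> R a \<and> (k, n) \<in> R c}" using la mn by simp
  then have p: "pcount R a c l n > 0" unfolding pcount_def by (auto simp: card_gt_0_iff)
  obtain v where v: "v \<in> X b" using X_ne[OF ab(2)] by blast
  have "pcount R a c x v = pcount R a c l n" using reg[OF ab(1) c(1) ab(2), of x v l n] v l(2) unfolding X_def by simp
  then have "pcount R a c x v > 0" using p by simp
  then obtain u where "(x, u) \<in> R a" "(u, v) \<in> R c" unfolding pcount_def
    by (metis (no_types, lifting) card.empty empty_Collect_eq less_irrefl)
  then show "c \<le> d \<and> (\<exists>u\<in>X a. \<exists>v\<in>X b. (u, v) \<in> R c)" using c(1) v unfolding X_def by blast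
qed

lemma cprod_card: assumes ab: "a \<le> d" "b \<le> d"
  shows "card (cprod R d (cv a) b) = 1 \<or> card (cprod R d (cv a) b) = 2"
proof -
  obtain u v where uv: "u \<in> X a" "v \<in> X b" using X_ne ab by blast
  have fin: "finite (cprod R d (cv a) b)" unfolding cprod_def by simp
  have "rel (u, v) \<in> cprod R d (cv a) b" using cprod_iff[OF ab] uv rel by blast
  then have "card (cprod R d (cv a) b) \<noteq> 0" using fin by (auto simp: card_eq_0_iff)
  moreover have "cprod R d (cv a) b \<subseteq> (\<lambda>u. rel (u, v)) ` X a"
  proof
    fix c assume "c \<in> cprod R d (cv a) b"
    then obtain u1 v1 where 1: "c \<le> d" "u1 \<in> X a" "v1 \<in> X b" "(u1, v1) \<in> R c" using cprod_iff[OF ab] by blast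
    obtain u2 where "u2 \<in> X a" "(u2, v) \<in> R c" using col_pos[OF ab(1) 1(1) ab(2) 1(2-4) uv(2)] by blast
    then show "c \<in> (\<lambda>u. rel (u, v)) ` X a" using rel_eq[OF 1(1)] by force
  qed
  then have "card (cprod R d (cv a) b) \<le> card (X a)" using card_image_le[of "X a"] card_mono
    by (metis finite finite_imageI le_trans)
  ultimately show ?thesis using X_le2[OF ab(1)] by linarith
qed

lemma cprod2_step: assumes ab: "a \<le> d" "b \<le> d" and c2: "card (cprod R d (cv a) b) = 2"
  shows "step a b"
proof -
  obtain c1 c2 where c: "cprod R d (cv a) b = {c1, c2}" "c1 \<noteq> c2" using c2 by (meson card_2_iff)
  have "c1 \<in> cprod R d (cv a) b" "c2 \<in> cprod R d (cv a) b" using c by auto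
  then obtain u1 v1 u2 v2 where 1: "c1 \<le> d" "u1 \<in> X a" "v1 \<in> X b" "(u1, v1) \<in> R c1"
    and 2: "c2 \<le> d" "u2 \<in> X a" "v2 \<in> X b" "(u2, v2) \<in> R c2" using cprod_iff[OF ab] by meson
  have "(u2, v2) \<notin> R c1" using uniq[OF 1(1) 2(1)] 2(4) c(2) by blast
  then have "R c1 \<inter> X a \<times> X b \<noteq> {}" "R c1 \<inter> X a \<times> X b \<noteq> X a \<times> X b" using 1 2 by blast+
  then show ?thesis using block_cases[OF ab(1) 1(1) ab(2)] by blast
qed
end



context qts begin

definition reach where "reach = tranclp step"

lemma inum_refl: assumes a: "a \<le> d" shows "inum R a 0 a = 1"
proof -
  obtain m n where mn: "(m, n) \<in> R a" using nonempty[OF a(1)] by auto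
  have "inum R a 0 a = pcount R a 0 m n" using inum_eq[OF a(1) _ a(1) mn] by simp
  also have "{l. (m, l) \<in> R a \<and> (l, n) \<in> R 0} = {n}" using mn R0 by auto
  then have "pcount R a 0 m n = 1" unfolding pcount_def by simp
  finally show ?thesis .
qed

lemma step_D: "step a b \<Longrightarrow> a \<le> d \<and> b \<le> d \<and> card (X a) = 2 \<and> card (X b) = 2"
  unfolding step_def by blast

lemma reach_D: "reach a b \<Longrightarrow> a \<le> d \<and> b \<le> d \<and> card (X a) = 2 \<and> card (X b) = 2"
  unfolding reach_def by (induction rule: tranclp_induct) (auto dest: step_D)

lemma reach_trans: "reach a b \<Longrightarrow> reach b c \<Longrightarrow> reach a c"
  unfolding reach_def by (rule tranclp_trans)

lemma step_reach: "step a b \<Longrightarrow> reach a b"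
  unfolding reach_def by (rule tranclp.r_into_trancl)

lemma reach_pbT: "reach a b \<Longrightarrow> \<exists>F. pb a b F \<and> (ind F :: 'x \<Rightarrow> 'x \<Rightarrow> 'f::field) \<in> TT"
  unfolding reach_def
proof (induction rule: tranclp_induct)
  case (base b)
  then obtain j where "j \<le> d" "pb a b (R j \<inter> X a \<times> X b)" using step_pb by blast
  moreover have "(ind (R j \<inter> X a \<times> X b) :: 'x \<Rightarrow> 'x \<Rightarrow> 'f) \<in> TT"
    using blockT step_D[OF base] \<open>j \<le> d\<close> by blast
  ultimately show ?case by blast
next
  case (step b c)
  obtain F where F: "pb a b F" "(ind F :: 'x \<Rightarrow> 'x \<Rightarrow> 'f) \<in> TT" using step.IH by blast
  obtain j where "j \<le> d" "pb b c (R j \<inter> X b \<times> X c)" using step_pb step.hyps(2) by blast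
  moreover have G: "(ind (R j \<inter> X b \<times> X c) :: 'x \<Rightarrow> 'x \<Rightarrow> 'f) \<in> TT"
    using blockT step_D[OF step.hyps(2)] \<open>j \<le> d\<close> by blast
  moreover have "mmult (ind F) (ind (R j \<inter> X b \<times> X c)) = (ind (F O (R j \<inter> X b \<times> X c)) :: 'x \<Rightarrow> 'x \<Rightarrow> 'f)"
    by (rule mult_func) (rule pb_func[OF F(1)])
  ultimately show ?case using pb_comp[OF F(1)] T_mult[OF F(2) G] by metis
qed

definition chain where
  "chain u v \<longleftrightarrow> (\<exists>a::nat. \<exists>i j l :: nat \<Rightarrow> nat. a \<ge> 1 \<and>
        (\<forall>b\<le>a. i b \<le> d \<and> j b \<le> d \<and> l b \<le> d) \<and>
        i 0 = u \<and> l a = v \<and>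
        (\<forall>b\<le>a. valency R d (i b) = 2 \<and> valency R d (l b) = 2 \<and> inum R (i b) (j b) (l b) = 1) \<and>
        (\<forall>c<a. l c = i (c + 1)))"

lemma bad_chain: "bad_pair R d u v \<longleftrightarrow> chain u v \<and> card (cprod R d (cv u) v) = 1"
  by (simp only: bad_pair_def chain_def)

lemma chain_reach_aux: fixes a :: nat and i j l :: "nat \<Rightarrow> nat" assumes H: "a \<ge> 1" "\<forall>b\<le>a. i b \<le> d \<and> j b \<le> d \<and> l b \<le> d" "i 0 = u" "l a = v"
    "\<forall>b\<le>a. valency R d (i b) = 2 \<and> valency R d (l b) = 2 \<and> inum R (i b) (j b) (l b) = 1"
    "\<forall>c<a. l c = i (c + 1)"
  shows "reach u v"
proof -
  have st: "step (i b) (l b)" if "b \<le> a" for b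
  proof -
    have 1: "i b \<le> d" "j b \<le> d" "l b \<le> d" using H(2) that by auto
    have 2: "valency R d (i b) = 2" "valency R d (l b) = 2" "inum R (i b) (j b) (l b) = 1" using H(5) that by auto
    show ?thesis unfolding step_def using 1 2 valency_card[OF 1(1)] valency_card[OF 1(3)] by auto
  qed
  have ind: "b \<le> a \<longrightarrow> reach u (l b)" for b
  proof (induction b)
    case 0 then show ?case using st[of 0] H(3) step_reach by simp
  next
    case (Suc b)
    show ?case
    proof
      assume b: "Suc b \<le> a"
      then have "reach u (l b)" using Suc.IH by simp
      moreover have "l b = i (Suc b)" using H(6) b by simp
      ultimately show "reach u (l (Suc b))" using st[OF b] step_reach reach_trans by metis
    qed
  qed
  then show ?thesis using H(4) ind[of a] by simp
qed

lemma chain_reach: "chain u v \<Longrightarrow> reach u v"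
  unfolding chain_def by (elim exE conjE) (rule chain_reach_aux; assumption)

lemma chain_base: assumes "step u v" shows "chain u v"
proof -
  obtain j0 where j0: "j0 \<le> d" "inum R u j0 v = 1" and uv: "u \<le> d" "v \<le> d" "card (X u) = 2" "card (X v) = 2"
    using assms unfolding step_def by blast
  let ?i = "\<lambda>n::nat. if n = 0 then u else v"
  let ?j = "\<lambda>n::nat. if n = 0 then j0 else 0"
  let ?l = "\<lambda>n::nat. v"
  have "\<forall>b\<le>1. ?i b \<le> d \<and> ?j b \<le> d \<and> ?l b \<le> d" using uv j0 by auto
  moreover have "\<forall>b\<le>(1::nat). valency R d (?i b) = 2 \<and> valency R d (?l b) = 2 \<and> inum R (?i b) (?j b) (?l b) = 1"
    using uv j0 valency_card inum_refl[OF uv(2)] by (auto simp: le_Suc_eq)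
  moreover have "\<forall>c<(1::nat). ?l c = ?i (c + 1)" by simp
  ultimately show ?thesis unfolding chain_def by (intro exI[of _ 1] exI[of _ ?i] exI[of _ ?j] exI[of _ ?l]) auto
qed

lemma chain_ext: fixes a :: nat and i j l :: "nat \<Rightarrow> nat" assumes H: "a \<ge> 1" "\<forall>b\<le>a. i b \<le> d \<and> j b \<le> d \<and> l b \<le> d" "i 0 = u" "l a = w"
    "\<forall>b\<le>a. valency R d (i b) = 2 \<and> valency R d (l b) = 2 \<and> inum R (i b) (j b) (l b) = 1"
    "\<forall>c<a. l c = i (c + 1)" and st: "step w v"
  shows "chain u v"
proof -
  obtain j0 where j0: "j0 \<le> d" "inum R w j0 v = 1" and wv: "w \<le> d" "v \<le> d" "card (X w) = 2" "card (X v) = 2"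
    using st unfolding step_def by blast
  let ?i = "i(a + 1 := w)"
  let ?j = "j(a + 1 := j0)"
  let ?l = "l(a + 1 := v)"
  have "\<forall>b\<le>a + 1. ?i b \<le> d \<and> ?j b \<le> d \<and> ?l b \<le> d" using H(2) wv j0 by (auto simp: le_Suc_eq)
  moreover have "\<forall>b\<le>a + 1. valency R d (?i b) = 2 \<and> valency R d (?l b) = 2 \<and> inum R (?i b) (?j b) (?l b) = 1"
    using H(5) wv j0 valency_card by (auto simp: le_Suc_eq)
  moreover have "\<forall>c<a + 1. ?l c = ?i (c + 1)" using H(4,6) by (auto simp: less_Suc_eq)
  moreover have "?i 0 = u" "?l (a + 1) = v" using H(3) by auto
  ultimately show ?thesis unfolding chain_def using H(1)
    by (intro exI[of _ "a + 1"] exI[of _ ?i] exI[of _ ?j] exI[of _ ?l]) simp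
qed

lemma reach_chain: assumes "reach u v" shows "chain u v"
  using assms unfolding reach_def
proof (induction rule: tranclp_induct)
  case (base v)
  then show ?case by (rule chain_base)
next
  case (step w v)
  from step.IH step.hyps(2) show ?case
    unfolding chain_def[of u w] by (elim exE conjE) (rule chain_ext; assumption)
qed

lemma count_split:
  "{(a, b). a \<le> d \<and> b \<le> d \<and> reach a b}
   = {(a, b). a \<le> d \<and> b \<le> d \<and> card (cprod R d (cv a) b) = 2}
     \<union> {(c, e). c \<le> d \<and> e \<le> d \<and> bad_pair R d c e}"
proof (intro set_eqI iffI)
  fix p assume "p \<in> {(a, b). a \<le> d \<and> b \<le> d \<and> reach a b}"
  then obtain a b where p: "p = (a, b)" "a \<le> d" "b \<le> d" "reach a b" by blast
  show "p \<in> {(a, b). a \<le> d \<and> b \<le> d \<and> card (cprod R d (cv a) b) = 2}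
     \<union> {(c, e). c \<le> d \<and> e \<le> d \<and> bad_pair R d c e}"
    using cprod_card[OF p(2,3)] reach_chain[OF p(4)] bad_chain p by auto
next
  fix p assume "p \<in> {(a, b). a \<le> d \<and> b \<le> d \<and> card (cprod R d (cv a) b) = 2}
     \<union> {(c, e). c \<le> d \<and> e \<le> d \<and> bad_pair R d c e}"
  then show "p \<in> {(a, b). a \<le> d \<and> b \<le> d \<and> reach a b}"
    using cprod2_step step_reach chain_reach bad_chain by auto
qed

lemma count_card:
  "card {(a, b). a \<le> d \<and> b \<le> d \<and> reach a b}
   = card {(a, b). a \<le> d \<and> b \<le> d \<and> card (cprod R d (cv a) b) = 2}
     + card {(c, e). c \<le> d \<and> e \<le> d \<and> bad_pair R d c e}"
proof -
  have fin: "finite {(a, b). a \<le> d \<and> b \<le> d \<and> P a b}" for P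
    by (rule finite_subset[of _ "{..d} \<times> {..d}"]) auto
  have "{(a, b). a \<le> d \<and> b \<le> d \<and> card (cprod R d (cv a) b) = 2}
     \<inter> {(c, e). c \<le> d \<and> e \<le> d \<and> bad_pair R d c e} = {}"
    using bad_chain by auto
  then show ?thesis unfolding count_split by (intro card_Un_disjoint fin)
qed

end



lemma mmult_add_left: "mmult (M + N) P = mmult M P + mmult N (P :: 'x::finite \<Rightarrow> 'x \<Rightarrow> 'f::field)"
  unfolding mmult_def by (simp add: fun_eq_iff ring_distribs sum.distrib)
lemma mmult_add_right: "mmult P (M + N) = mmult P M + mmult P (N :: 'x::finite \<Rightarrow> 'x \<Rightarrow> 'f::field)"
  unfolding mmult_def by (simp add: fun_eq_iff ring_distribs sum.distrib)
lemma mmult_scale_left: "mmult (mscale c M) P = mscale c (mmult M (P :: 'x::finite \<Rightarrow> 'x \<Rightarrow> 'f::field))"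
  unfolding mmult_def mscale_def by (simp add: fun_eq_iff sum_distrib_left mult.assoc)
lemma mmult_scale_right: "mmult P (mscale c M) = mscale c (mmult P (M :: 'x::finite \<Rightarrow> 'x \<Rightarrow> 'f::field))"
  unfolding mmult_def mscale_def by (simp add: fun_eq_iff sum_distrib_left mult.left_commute)
lemma mmult_zero_left: "mmult 0 (P :: 'x::finite \<Rightarrow> 'x \<Rightarrow> 'f::field) = 0"
  unfolding mmult_def by (simp add: fun_eq_iff)
lemma mmult_zero_right: "mmult P (0 :: 'x::finite \<Rightarrow> 'x \<Rightarrow> 'f::field) = 0"
  unfolding mmult_def by (simp add: fun_eq_iff)

lemma span_mult_gen:
  assumes cl: "\<And>m1 m2. m1 \<in> B \<Longrightarrow> m2 \<in> B \<Longrightarrow> mmult m1 m2 \<in> mv.span B"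
  and x: "x \<in> mv.span B" and y: "y \<in> mv.span (B :: ('x::finite \<Rightarrow> 'x \<Rightarrow> 'f::field) set)"
  shows "mmult x y \<in> mv.span B"
proof -
  have one: "mmult m y \<in> mv.span B" if m: "m \<in> B" for m
    using y
  proof (induction rule: mv.span_induct_alt)
    case base then show ?case by (simp only: mmult_zero_right) (rule mv.span_zero)
  next
    case (step c z w)
    have "mmult m (mscale c z + w) = mscale c (mmult m z) + mmult m w"
      by (simp only: mmult_add_right mmult_scale_right)
    then show ?case using step mv.span_add mv.span_scale cl[OF m step(1)] by metis
  qed
  show ?thesis using x
  proof (induction rule: mv.span_induct_alt)
    case base then show ?case by (simp only: mmult_zero_left) (rule mv.span_zero)
  next
    case (step c z w)
    have "mmult (mscale c z + w) y = mscale c (mmult z y) + mmult w y"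
      by (simp only: mmult_add_left mmult_scale_left)
    then show ?case using step mv.span_add mv.span_scale one[OF step(1)] by metis
  qed
qed

lemma sum_single: "finite A \<Longrightarrow> m0 \<in> A \<Longrightarrow> (\<And>m. m \<in> A \<Longrightarrow> m \<noteq> m0 \<Longrightarrow> g m = 0) \<Longrightarrow> sum g A = (g m0 :: 'a::comm_monoid_add)"
  by (simp add: sum.remove sum.neutral)

context qts begin

definition Jm :: "nat \<Rightarrow> nat \<Rightarrow> 'x \<Rightarrow> 'x \<Rightarrow> 'f::field" where "Jm a b = ind (X a \<times> X b)"
definition Qm :: "nat \<Rightarrow> nat \<Rightarrow> 'x \<Rightarrow> 'x \<Rightarrow> 'f::field" where
  "Qm a b = (SOME M. M \<in> TT \<and> (\<exists>F. M = ind F \<and> pb a b F))"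
definition Good where "Good = {(a, b). a \<le> d \<and> b \<le> d \<and> reach a b}"
definition Bs :: "('x \<Rightarrow> 'x \<Rightarrow> 'f::field) set" where
  "Bs = (\<lambda>(a, b). Jm a b) ` ({..d} \<times> {..d}) \<union> (\<lambda>(a, b). Qm a b) ` Good"

lemma Qm_prop: assumes "reach a b"
  shows "(Qm a b :: 'x \<Rightarrow> 'x \<Rightarrow> 'f::field) \<in> TT \<and> (\<exists>F. Qm a b = (ind F :: 'x \<Rightarrow> 'x \<Rightarrow> 'f) \<and> pb a b F)"
proof -
  obtain F where "pb a b F" "(ind F :: 'x \<Rightarrow> 'x \<Rightarrow> 'f) \<in> TT" using reach_pbT[OF assms] by blast
  then have "\<exists>M. (M :: 'x \<Rightarrow> 'x \<Rightarrow> 'f) \<in> TT \<and> (\<exists>F. M = ind F \<and> pb a b F)" by blast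
  then show ?thesis unfolding Qm_def by (rule someI_ex)
qed

lemma fin_Good: "finite Good"
  unfolding Good_def by (rule finite_subset[of _ "{..d} \<times> {..d}"]) auto
lemma fin_Bs: "finite Bs"
  unfolding Bs_def using fin_Good by simp

lemma J_Bs: "a \<le> d \<Longrightarrow> b \<le> d \<Longrightarrow> Jm a b \<in> Bs"
  unfolding Bs_def by (intro UnI1 image_eqI[of _ _ "(a, b)"]) auto
lemma Q_Bs: "reach a b \<Longrightarrow> Qm a b \<in> Bs"
  unfolding Bs_def Good_def using reach_D[of a b] by (intro UnI2 image_eqI[of _ _ "(a, b)"]) auto

lemma Bs_T: "Bs \<subseteq> TT"
proof
  fix m assume "m \<in> Bs"
  then have "(\<exists>a b. a \<le> d \<and> b \<le> d \<and> m = Jm a b) \<or> (\<exists>a b. reach a b \<and> m = Qm a b)"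
    unfolding Bs_def Good_def by auto
  then show "m \<in> TT"
  proof
    assume "\<exists>a b. a \<le> d \<and> b \<le> d \<and> m = Jm a b"
    then show ?thesis unfolding Jm_def using J_T by blast
  next
    assume "\<exists>a b. reach a b \<and> m = Qm a b"
    then show ?thesis using Qm_prop by blast
  qed
qed

lemma pb_in: "pb a b F \<Longrightarrow> F \<subseteq> X a \<times> X b" unfolding pb_def by blast

lemma X_iff: "a \<le> d \<Longrightarrow> u \<in> X a \<longleftrightarrow> a = rel (x, u)"
  unfolding X_def using rel_iff by simp

lemma perm_span: assumes r: "reach a b" and G: "pb a b G"
  shows "(ind G :: 'x \<Rightarrow> 'x \<Rightarrow> 'f::field) \<in> mv.span Bs"
proof -
  obtain F where F: "(Qm a b :: 'x \<Rightarrow> 'x \<Rightarrow> 'f) = ind F" "pb a b F" using Qm_prop[OF r] by blast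
  have ab: "a \<le> d" "b \<le> d" "card (X b) = 2" using reach_D[OF r] by auto
  have Q: "(Qm a b :: 'x \<Rightarrow> 'x \<Rightarrow> 'f) \<in> Bs" using Q_Bs[OF r] .
  have J: "(Jm a b :: 'x \<Rightarrow> 'x \<Rightarrow> 'f) \<in> Bs" using J_Bs ab by blast
  have "G = F \<or> G = X a \<times> X b - F" using pb_two[OF ab(3) F(2) G] .
  then show ?thesis
  proof
    assume "G = F" then show ?thesis using Q F(1) mv.span_base by metis
  next
    assume "G = X a \<times> X b - F"
    then have "(ind G :: 'x \<Rightarrow> 'x \<Rightarrow> 'f) = Jm a b - Qm a b"
      unfolding Jm_def F(1) by (simp only: ind_diff[OF pb_in[OF F(2)]])
    then show ?thesis using mv.span_diff mv.span_base J Q by metis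
  qed
qed

lemma J_span: "a \<le> d \<Longrightarrow> b \<le> d \<Longrightarrow> (ind (X a \<times> X b) :: 'x \<Rightarrow> 'x \<Rightarrow> 'f::field) \<in> mv.span Bs"
  using mv.span_base[OF J_Bs] unfolding Jm_def by blast

lemma Bs_cases: assumes "m \<in> Bs"
  obtains a b where "a \<le> d" "b \<le> d" "m = ind (X a \<times> X b)"
  | a b F where "reach a b" "a \<le> d" "b \<le> d" "pb a b F" "m = ind F" "m = Qm a b"
proof -
  { assume "m \<in> (\<lambda>(a, b). Jm a b) ` ({..d} \<times> {..d})"
    then obtain a b where "a \<le> d" "b \<le> d" "m = Jm a b" by auto
    then have ?thesis using that(1) unfolding Jm_def by blast }
  moreover
  { assume "m \<in> (\<lambda>(a, b). Qm a b) ` Good"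
    then obtain a b where ab: "a \<le> d" "b \<le> d" "reach a b" "m = Qm a b" unfolding Good_def by auto
    then obtain F where "m = ind F" "pb a b F" using Qm_prop[OF ab(3)] by blast
    then have ?thesis using that(2) ab by blast }
  ultimately show ?thesis using assms unfolding Bs_def by blast
qed


lemma prod_span: assumes m1: "m1 \<in> Bs" and m2: "m2 \<in> Bs"
  shows "mmult m1 m2 \<in> mv.span (Bs :: ('x \<Rightarrow> 'x \<Rightarrow> 'f::field) set)"
proof -
  have zero: "mmult (ind F) (ind G :: 'x \<Rightarrow> 'x \<Rightarrow> 'f) \<in> mv.span Bs"
    if "F \<subseteq> A \<times> X b" "G \<subseteq> X b' \<times> C" "b \<le> d" "b' \<le> d" "b \<noteq> b'" for F G A C b b'
  proof -
    have "mmult (ind F) (ind G :: 'x \<Rightarrow> 'x \<Rightarrow> 'f) = 0"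
      by (rule mult_zero) (use that X_disj in blast)
    then show ?thesis by (simp add: mv.span_zero)
  qed
  show ?thesis
  proof (cases rule: Bs_cases[OF m1])
    case (1 a b)
    note A = this
    show ?thesis
    proof (cases rule: Bs_cases[OF m2])
      case (1 b' c)
      show ?thesis
      proof (cases "b = b'")
        case True
        then show ?thesis using A 1 by (simp add: mult_J_J mv.span_scale J_span)
      next
        case False
        then show ?thesis using A 1 zero[of "X a \<times> X b" "X a" b "X b' \<times> X c" b' "X c"] by auto
      qed
    next
      case (2 b' c G)
      show ?thesis
      proof (cases "b = b'")
        case True
        have "mmult (ind (X a \<times> X b)) (ind G :: 'x \<Rightarrow> 'x \<Rightarrow> 'f) = ind (X a \<times> X c)"
          by (rule mult_J_perm) (use 2 True pb_in in \<open>auto simp: pb_def\<close>)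
        then show ?thesis using A 2 J_span by simp
      next
        case False
        then show ?thesis using A 2 zero[of "X a \<times> X b" "X a" b G b' "X c"] pb_in by auto
      qed
    qed
  next
    case (2 a b F)
    note A = this
    show ?thesis
    proof (cases rule: Bs_cases[OF m2])
      case (1 b' c)
      show ?thesis
      proof (cases "b = b'")
        case True
        have "mmult (ind F) (ind (X b \<times> X c) :: 'x \<Rightarrow> 'x \<Rightarrow> 'f) = ind (X a \<times> X c)"
          by (rule mult_perm_J) (use A True pb_in in \<open>auto simp: pb_def\<close>)
        then show ?thesis using A 1 True J_span by simp
      next
        case False
        then show ?thesis using A 1 zero[of F "X a" b "X b' \<times> X c" b' "X c"] pb_in by auto
      qed
    next
      case (2 b' c G)
      show ?thesis
      proof (cases "b = b'")
        case True
        have "mmult (ind F) (ind G :: 'x \<Rightarrow> 'x \<Rightarrow> 'f) = ind (F O G)"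
          by (rule mult_func) (rule pb_func[OF A(4)])
        moreover have "pb a c (F O G)" using pb_comp A(4) 2(4) True by simp
        moreover have "reach a c" using reach_trans A(1) 2(1) True by simp
        ultimately show ?thesis using A 2 perm_span by simp
      next
        case False
        then show ?thesis using A 2 zero[of F "X a" b G b' "X c"] pb_in by auto
      qed
    qed
  qed
qed

end



lemma ind_empty: "ind {} = (0 :: 'x \<Rightarrow> 'x \<Rightarrow> 'f::field)"
  by (simp add: ind_def fun_eq_iff)

context qts begin

lemma block_span: assumes "a \<le> d" "c \<le> d" "b \<le> d"
  shows "(ind (R c \<inter> X a \<times> X b) :: 'x \<Rightarrow> 'x \<Rightarrow> 'f::field) \<in> mv.span Bs"
proof -
  consider "R c \<inter> X a \<times> X b = {}" | "R c \<inter> X a \<times> X b = X a \<times> X b"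
    | "pb a b (R c \<inter> X a \<times> X b)" "step a b" using block_cases[OF assms] by blast
  then show ?thesis
  proof cases
    case 1 then show ?thesis by (simp only: ind_empty mv.span_zero)
  next
    case 2 then show ?thesis using J_span assms by simp
  next
    case 3 then show ?thesis using perm_span step_reach by blast
  qed
qed

lemma adj_span: assumes c: "c \<le> d" shows "(adj_mat R c :: 'x \<Rightarrow> 'x \<Rightarrow> 'f::field) \<in> mv.span Bs"
proof -
  have "(adj_mat R c :: 'x \<Rightarrow> 'x \<Rightarrow> 'f) = (\<Sum>p\<in>{..d} \<times> {..d}. ind (R c \<inter> X (fst p) \<times> X (snd p)))"
  proof (intro ext)
    fix u v
    have "(\<Sum>p\<in>{..d} \<times> {..d}. (ind (R c \<inter> X (fst p) \<times> X (snd p)) :: 'x \<Rightarrow> 'x \<Rightarrow> 'f) u v)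
        = (\<Sum>p\<in>{..d} \<times> {..d}. if p = (rel (x, u), rel (x, v)) then ind (R c) u v else 0)"
      by (intro sum.cong refl) (auto simp: ind_apply X_iff)
    also have "\<dots> = ind (R c) u v" using rel(1) by (simp add: sum.delta)
    finally show "(adj_mat R c :: 'x \<Rightarrow> 'x \<Rightarrow> 'f) u v = (\<Sum>p\<in>{..d} \<times> {..d}. ind (R c \<inter> X (fst p) \<times> X (snd p))) u v"
      by (simp add: sum_app adj_ind)
  qed
  moreover have "(\<Sum>p\<in>{..d} \<times> {..d}. (ind (R c \<inter> X (fst p) \<times> X (snd p)) :: 'x \<Rightarrow> 'x \<Rightarrow> 'f)) \<in> mv.span Bs"
    by (rule mv.span_sum) (use block_span c in auto)
  ultimately show ?thesis by simp
qed

lemma dual_span: assumes a: "a \<le> d" shows "(dual_idem R x a :: 'x \<Rightarrow> 'x \<Rightarrow> 'f::field) \<in> mv.span Bs"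
proof (cases "card (X a) = 1")
  case True
  then obtain p where "X a = {p}" by (auto simp: card_1_singleton_iff)
  then have "D a = X a \<times> X a" unfolding D_def by auto
  then show ?thesis using J_span a by (simp add: dual_ind)
next
  case False
  then have c2: "card (X a) = 2" using X_card[OF a] by simp
  have "pb a a (D a)" by (rule pbI) (auto simp: D_def)
  then show ?thesis using perm_span[OF step_reach[OF step_reflI[OF a c2]]] by (simp add: dual_ind)
qed

lemma one_adj: "(\<lambda>i j. if i = j then 1 else 0) = (adj_mat R 0 :: 'x \<Rightarrow> 'x \<Rightarrow> 'f::field)"
  unfolding adj_mat_def using R0 by (auto simp: fun_eq_iff)

lemma T_span: "M \<in> TT \<Longrightarrow> M \<in> mv.span (Bs :: ('x \<Rightarrow> 'x \<Rightarrow> 'f::field) set)"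
  unfolding terwilliger_def
proof (induction rule: gen_alg.induct)
  case (gen M)
  then show ?case using adj_span dual_span by blast
next
  case one
  have "(adj_mat R 0 :: 'x \<Rightarrow> 'x \<Rightarrow> 'f) \<in> mv.span Bs" by (rule adj_span) simp
  then show ?case by (simp only: one_adj)
next
  case (add M N)
  show ?case by (rule mv.span_add[OF add.IH])
next
  case (scale M c)
  show ?case by (rule mv.span_scale[OF scale.IH])
next
  case (mult M N)
  then show ?case using span_mult_gen prod_span by blast
qed

lemma span_eq: "mv.span Bs = (TT :: ('x \<Rightarrow> 'x \<Rightarrow> 'f::field) set)"
  by (rule mv.span_subspace[OF Bs_T _ T_subspace]) (use T_span in blast)

lemma other_v: assumes "pb a b F" "card (X b) = 2" "u \<in> X a" shows "\<exists>v'\<in>X b. (u, v') \<notin> F"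
proof (rule ccontr)
  assume "\<not> ?thesis"
  then have all: "\<forall>v'\<in>X b. (u, v') \<in> F" by blast
  obtain w1 w2 where "X b = {w1, w2}" "w1 \<noteq> w2" using assms(2) by (meson card_2_iff)
  then show False using all pb_func[OF assms(1)] by auto
qed

lemma supp: assumes "m \<in> Bs" "m u v \<noteq> 0" "u \<in> X a" "v \<in> X b" "a \<le> d" "b \<le> d"
  shows "m = Jm a b \<or> (reach a b \<and> m = Qm a b)"
  using assms(1)
proof (cases rule: Bs_cases)
  case (1 a' b')
  then have "u \<in> X a'" "v \<in> X b'" using assms(2) by (auto simp: ind_apply split: if_splits)
  then have "a' = a" "b' = b" using X_disj assms 1 by blast+
  then show ?thesis using 1 unfolding Jm_def by simp
next
  case (2 a' b' F)
  then have "(u, v) \<in> F" using assms(2) by (auto simp: ind_apply split: if_splits)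
  then have "u \<in> X a'" "v \<in> X b'" using pb_sub[OF 2(4)] by auto
  then have "a' = a" "b' = b" using X_disj assms 2 by blast+
  then show ?thesis using 2 by simp
qed

lemma indep: "mv.independent (Bs :: ('x \<Rightarrow> 'x \<Rightarrow> 'f::field) set)"
proof (rule mv.independent_if_scalars_zero[OF fin_Bs])
  fix f :: "('x \<Rightarrow> 'x \<Rightarrow> 'f) \<Rightarrow> 'f" and m :: "'x \<Rightarrow> 'x \<Rightarrow> 'f"
  assume S: "(\<Sum>m\<in>Bs. mscale (f m) m) = 0" and m: "m \<in> Bs"
  have ev: "(\<Sum>m\<in>Bs. f m * m u v) = 0" for u v
  proof -
    have "(\<Sum>m\<in>Bs. mscale (f m) m) u v = 0" using S by simp
    then show ?thesis by (simp add: sum_app fin_Bs mscale_def)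
  qed
  have Jz: "f (Jm a b) = 0" if ab: "a \<le> d" "b \<le> d" for a b
  proof -
    obtain u where u: "u \<in> X a" using X_ne[OF ab(1)] by blast
    obtain v where v: "v \<in> X b" "reach a b \<longrightarrow> (Qm a b :: 'x \<Rightarrow> 'x \<Rightarrow> 'f) u v = 0"
    proof (cases "reach a b")
      case True
      then obtain F where F: "(Qm a b :: 'x \<Rightarrow> 'x \<Rightarrow> 'f) = ind F" "pb a b F" using Qm_prop by blast
      obtain v' where "v' \<in> X b" "(u, v') \<notin> F" using other_v[OF F(2) _ u] reach_D[OF True] by blast
      then show ?thesis using that F(1) by (simp add: ind_apply)
    next
      case False
      then show ?thesis using that X_ne[OF ab(2)] by blast
    qed
    have "(\<Sum>m\<in>Bs. f m * m u v) = f (Jm a b) * Jm a b u v"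
    proof (rule sum_single[OF fin_Bs J_Bs[OF ab]])
      fix m' :: "'x \<Rightarrow> 'x \<Rightarrow> 'f" assume m': "m' \<in> Bs" "m' \<noteq> Jm a b"
      show "f m' * m' u v = 0"
      proof (rule ccontr)
        assume "f m' * m' u v \<noteq> 0"
        then have "m' u v \<noteq> 0" by auto
        then show False using supp[OF m'(1) _ u v(1) ab] m'(2) v(2) by auto
      qed
    qed
    then show ?thesis using ev[of u v] u v(1) by (simp add: Jm_def ind_apply)
  qed
  have Qz: "f (Qm a b) = 0" if r: "reach a b" for a b
  proof -
    obtain F where F: "(Qm a b :: 'x \<Rightarrow> 'x \<Rightarrow> 'f) = ind F" "pb a b F" using Qm_prop[OF r] by blast
    have ab: "a \<le> d" "b \<le> d" using reach_D[OF r] by auto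
    obtain u where u: "u \<in> X a" using X_ne[OF ab(1)] by blast
    obtain v where uv: "(u, v) \<in> F" using pb_row[OF F(2) u] by blast
    have v: "v \<in> X b" using pb_sub[OF F(2) uv] by simp
    have "(\<Sum>m\<in>Bs. f m * m u v) = f (Qm a b) * Qm a b u v"
    proof (rule sum_single[OF fin_Bs Q_Bs[OF r]])
      fix m' :: "'x \<Rightarrow> 'x \<Rightarrow> 'f" assume m': "m' \<in> Bs" "m' \<noteq> Qm a b"
      show "f m' * m' u v = 0"
      proof (cases "m' u v = 0")
        case False
        then have "m' = Jm a b" using supp[OF m'(1) _ u v ab] m'(2) by auto
        then show ?thesis using Jz[OF ab] by simp
      qed simp
    qed
    then show ?thesis using ev[of u v] F(1) uv by (simp add: ind_apply)
  qed
  from m show "f m = 0" unfolding Bs_def Good_def using Jz Qz by auto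
qed

lemma card_Bs: "card (Bs :: ('x \<Rightarrow> 'x \<Rightarrow> 'f::field) set) = (d + 1)^2 + card Good"
proof -
  let ?J = "(\<lambda>(a, b). Jm a b :: 'x \<Rightarrow> 'x \<Rightarrow> 'f)"
  let ?Q = "(\<lambda>(a, b). Qm a b :: 'x \<Rightarrow> 'x \<Rightarrow> 'f)"
  have injJ: "inj_on ?J ({..d} \<times> {..d})"
  proof (rule inj_onI, clarify)
    fix a b a' b' assume ab: "a \<le> d" "b \<le> d" "a' \<le> d" "b' \<le> d" and e: "(Jm a b :: 'x \<Rightarrow> 'x \<Rightarrow> 'f) = Jm a' b'"
    obtain u v where uv: "u \<in> X a" "v \<in> X b" using X_ne ab by blast
    have "(Jm a b :: 'x \<Rightarrow> 'x \<Rightarrow> 'f) u v \<noteq> 0" using uv by (simp add: Jm_def ind_apply)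
    then have "(Jm a' b' :: 'x \<Rightarrow> 'x \<Rightarrow> 'f) u v \<noteq> 0" using e by simp
    then have "u \<in> X a'" "v \<in> X b'" by (auto simp: Jm_def ind_apply split: if_splits)
    then show "a = a' \<and> b = b'" using X_disj ab uv by blast
  qed
  have injQ: "inj_on ?Q Good"
  proof (rule inj_onI, clarify)
    fix a b a' b' assume ab: "(a, b) \<in> Good" "(a', b') \<in> Good" and e: "(Qm a b :: 'x \<Rightarrow> 'x \<Rightarrow> 'f) = Qm a' b'"
    have r: "reach a b" "reach a' b'" using ab unfolding Good_def by auto
    obtain F where F: "(Qm a b :: 'x \<Rightarrow> 'x \<Rightarrow> 'f) = ind F" "pb a b F" using Qm_prop[OF r(1)] by blast
    obtain F' where F': "(Qm a' b' :: 'x \<Rightarrow> 'x \<Rightarrow> 'f) = ind F'" "pb a' b' F'" using Qm_prop[OF r(2)] by blast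
    obtain u where u: "u \<in> X a" using X_ne reach_D[OF r(1)] by blast
    obtain v where uv: "(u, v) \<in> F" using pb_row[OF F(2) u] by blast
    have "(u, v) \<in> F'" using uv e F F' by (metis ind_apply zero_neq_one)
    then show "a = a' \<and> b = b'" using pb_sub[OF F(2) uv] pb_sub[OF F'(2)] X_disj reach_D r by blast
  qed
  have disj: "?J ` ({..d} \<times> {..d}) \<inter> ?Q ` Good = {}"
  proof (rule ccontr)
    assume "?J ` ({..d} \<times> {..d}) \<inter> ?Q ` Good \<noteq> {}"
    then obtain a b a' b' where ab: "a \<le> d" "b \<le> d" "reach a' b'" and e: "(Jm a b :: 'x \<Rightarrow> 'x \<Rightarrow> 'f) = Qm a' b'"
      unfolding Good_def by auto
    obtain F where F: "(Qm a' b' :: 'x \<Rightarrow> 'x \<Rightarrow> 'f) = ind F" "pb a' b' F" using Qm_prop[OF ab(3)] by blast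
    obtain u where u: "u \<in> X a'" using X_ne reach_D[OF ab(3)] by blast
    obtain v where uv: "(u, v) \<in> F" using pb_row[OF F(2) u] by blast
    have "(Jm a b :: 'x \<Rightarrow> 'x \<Rightarrow> 'f) u v \<noteq> 0" using e F(1) uv by (simp add: ind_apply)
    then have "u \<in> X a" "v \<in> X b" by (auto simp: Jm_def ind_apply split: if_splits)
    moreover have "v \<in> X b'" using pb_sub[OF F(2) uv] by simp
    ultimately have eq: "a = a'" "b = b'" using X_disj ab u reach_D[OF ab(3)] by blast+
    obtain v' where v': "v' \<in> X b'" "(u, v') \<notin> F" using other_v[OF F(2) _ u] reach_D[OF ab(3)] by blast
    have "(Jm a b :: 'x \<Rightarrow> 'x \<Rightarrow> 'f) u v' = 1" using u v' eq by (simp add: Jm_def ind_apply)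
    moreover have "(Qm a' b' :: 'x \<Rightarrow> 'x \<Rightarrow> 'f) u v' = 0" using F(1) v' by (simp add: ind_apply)
    ultimately show False using e by simp
  qed
  have "card (Bs :: ('x \<Rightarrow> 'x \<Rightarrow> 'f) set) = card (?J ` ({..d} \<times> {..d})) + card (?Q ` Good)"
    unfolding Bs_def using disj fin_Good by (intro card_Un_disjoint) auto
  also have "\<dots> = card ({..d} \<times> {..d}) + card Good"
    using card_image[OF injJ] card_image[OF injQ] by simp
  also have "card ({..d} \<times> {..d}) = (d + 1)^2" by (simp add: card_cartesian_product power2_eq_square)
  finally show ?thesis .
qed

lemma main: "fdim (TT :: ('x \<Rightarrow> 'x \<Rightarrow> 'f::field) set)
         = (d + 1)^2
           + card {(a, b). a \<le> d \<and> b \<le> d \<and> card (cprod R d (conv_idx R d a) b) = 2}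
           + card {(c, e). c \<le> d \<and> e \<le> d \<and> bad_pair R d c e}"
proof -
  have "fdim (TT :: ('x \<Rightarrow> 'x \<Rightarrow> 'f) set) = mv.dim (mv.span (Bs :: ('x \<Rightarrow> 'x \<Rightarrow> 'f) set))"
    unfolding fdim_eq span_eq ..
  also have "\<dots> = card (Bs :: ('x \<Rightarrow> 'x \<Rightarrow> 'f) set)"
    using mv.dim_span mv.dim_eq_card_independent[OF indep] by simp
  also have "\<dots> = (d + 1)^2 + card Good" by (rule card_Bs)
  finally show ?thesis using count_card unfolding Good_def by simp
qed

end

theorem theoremA:
  fixes R :: "nat \<Rightarrow> ('x::finite \<times> 'x) set" and d :: nat and x :: 'x
  assumes "is_scheme R d" and "quasi_thin R d"
  shows "fdim (terwilliger R d x :: ('x \<Rightarrow> 'x \<Rightarrow> 'f::field) set)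
         = (d + 1)^2
           + card {(a, b). a \<le> d \<and> b \<le> d \<and> card (cprod R d (conv_idx R d a) b) = 2}
           + card {(c, e). c \<le> d \<and> e \<le> d \<and> bad_pair R d c e}"
proof -
  interpret qts R d x using assms by unfold_locales
  show ?thesis by (rule main)
qed


end
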